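(* For every $k\geq 4$, the groups $\mathrm{FB}_k$ and $\mathrm{PFB}_k$ have trivial virtual centres.
   Context: $\mathrm{FB}_k=\langle \sigma_1,\ldots,\sigma_{k-1}\mid \sigma_i^2=1,\ [\sigma_i,\sigma_j]=1 \text{ whenever } |i-j|\ge 2\rangle$, and $\mathrm{PFB}_k$ is the kernel of the homomorphism $\mathrm{FB}_k\to\mathrm{Sym}(k)$ sending $\sigma_i$ to $(i,i+1)$. The virtual centre $\mathrm{VZ}(G)$ of a group $G$ is the set of elements of $G$ that centralise some finite-index subgroup of $G$. *)

theory Defs
  imports "HOL-Algebra.Sym_Groups" "HOL-Combinatorics.Transposition"
begin

text \<open>Words in the generators sigma_1, ..., sigma_(k-1), encoded by their indices.\<close>
definition fb_words :: "nat \<Rightarrow> nat list set" where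
  "fb_words k = {w. set w \<subseteq> {1..<k}}"

inductive fb_step :: "nat \<Rightarrow> nat list \<Rightarrow> nat list \<Rightarrow> bool" for k where
  cancel: "i \<in> {1..<k} \<Longrightarrow> fb_step k (xs @ [i, i] @ ys) (xs @ ys)"
| commute: "i \<in> {1..<k} \<Longrightarrow> j \<in> {1..<k} \<Longrightarrow> i + 2 \<le> j \<or> j + 2 \<le> i \<Longrightarrow>
     fb_step k (xs @ [i, j] @ ys) (xs @ [j, i] @ ys)"

definition fb_rel :: "nat \<Rightarrow> (nat list \<times> nat list) set" where
  "fb_rel k = {(u, v). u \<in> fb_words k \<and> v \<in> fb_words k \<and>
      (u, v) \<in> ({(x, y). fb_step k x y} \<union> {(x, y). fb_step k y x})\<^sup>*}"

definition FB :: "nat \<Rightarrow> nat list set monoid" where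
  "FB k = \<lparr> carrier = fb_words k // fb_rel k,
            mult = (\<lambda>A B. \<Union>a\<in>A. \<Union>b\<in>B. fb_rel k `` {a @ b}),
            one = fb_rel k `` {[]} \<rparr>"

fun word_perm :: "nat list \<Rightarrow> nat \<Rightarrow> nat" where
  "word_perm [] = id"
| "word_perm (i # w) = transpose i (Suc i) \<circ> word_perm w"

definition fb_to_sym :: "nat \<Rightarrow> nat list set \<Rightarrow> nat \<Rightarrow> nat" where
  "fb_to_sym k A = word_perm (SOME w. w \<in> A)"

definition PFB :: "nat \<Rightarrow> nat list set monoid" where
  "PFB k = (FB k)\<lparr> carrier := kernel (FB k) (sym_group k) (fb_to_sym k) \<rparr>"

definition virtual_centre :: "('a, 'b) monoid_scheme \<Rightarrow> 'a set" where
  "virtual_centre G = {g \<in> carrier G. \<exists>H. subgroup H G \<and> finite (rcosets\<^bsub>G\<^esub> H) \<and>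
      (\<forall>h\<in>H. g \<otimes>\<^bsub>G\<^esub> h = h \<otimes>\<^bsub>G\<^esub> g)}"

end

theory Submission
  imports Defs
begin


definition nb :: "nat \<Rightarrow> nat \<Rightarrow> bool" where
  "nb i y \<longleftrightarrow> y + 1 = i \<or> y = i \<or> y = i + 1"

lemma nb_sym: "nb i y = nb y i" unfolding nb_def by auto

fun fp :: "nat \<Rightarrow> nat list \<Rightarrow> bool" where
  "fp i [] = False"
| "fp i (x # w) = (if x = i then True else if nb i x then False else fp i w)"

fun rd :: "nat list \<Rightarrow> bool" where
  "rd [] = True"
| "rd (x # w) = (rd w \<and> \<not> fp x w)"

definition lp :: "nat \<Rightarrow> nat list \<Rightarrow> bool" where "lp i w = fp i (rev w)"

definition act :: "nat \<Rightarrow> nat list \<Rightarrow> nat list" where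
  "act i w = (if fp i w then remove1 i w else i # w)"

definition Phi :: "nat list \<Rightarrow> nat list" where "Phi w = foldr act w []"

definition cols :: "nat list \<Rightarrow> nat \<Rightarrow> nat list" where
  "cols w c = filter (\<lambda>x. x + 1 = c \<or> x = c) w"

definition actC :: "nat \<Rightarrow> (nat \<Rightarrow> nat list) \<Rightarrow> nat \<Rightarrow> nat list" where
  "actC i C = (if (\<exists>t. C i = i # t) \<and> (\<exists>t. C (Suc i) = i # t)
     then C(i := tl (C i), Suc i := tl (C (Suc i)))
     else C(i := i # C i, Suc i := i # C (Suc i)))"

definition PhiC :: "nat list \<Rightarrow> nat \<Rightarrow> nat list" where "PhiC w = foldr actC w (\<lambda>_. [])"

lemma fp_app: "fp i (u @ v) = (fp i u \<or> ((\<forall>x\<in>set u. \<not> nb i x) \<and> fp i v))"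
  by (induction u) (auto simp: nb_def)

lemma fp_split: "fp i w \<Longrightarrow> \<exists>u v. w = u @ i # v \<and> (\<forall>x\<in>set u. \<not> nb i x)"
proof (induction w)
  case Nil then show ?case by simp
next
  case (Cons x w)
  show ?case
  proof (cases "x = i")
    case True then show ?thesis using Cons.prems by (intro exI[of _ "[]"] exI[of _ w]) auto
  next
    case False
    with Cons.prems have "\<not> nb i x" "fp i w" by (auto split: if_splits)
    with Cons.IH obtain u v where "w = u @ i # v" "\<forall>x\<in>set u. \<not> nb i x" by blast
    then show ?thesis using \<open>\<not> nb i x\<close> by (intro exI[of _ "x # u"] exI[of _ v]) auto
  qed
qed

lemma fp_cols: "fp i w \<longleftrightarrow> (\<exists>t. cols w i = i # t) \<and> (\<exists>t. cols w (Suc i) = i # t)"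
  by (induction w) (auto simp: cols_def nb_def)

lemma cols_app: "cols (u @ v) c = cols u c @ cols v c" by (simp add: cols_def)
lemma cols_cons: "cols (x # w) c = (if x + 1 = c \<or> x = c then x # cols w c else cols w c)"
  by (simp add: cols_def)

lemma cols_avoid: "\<forall>x\<in>set u. \<not> nb i x \<Longrightarrow> c = i \<or> c = Suc i \<Longrightarrow> cols u c = []"
  by (induction u) (auto simp: cols_def nb_def)

lemma cols_remove_fp:
  assumes "fp i w"
  shows "cols (remove1 i w) = (cols w)(i := tl (cols w i), Suc i := tl (cols w (Suc i)))"
proof -
  obtain u v where uv: "w = u @ i # v" "\<forall>x\<in>set u. \<not> nb i x" using fp_split[OF assms] by blast
  have "i \<notin> set u" using uv(2) by (auto simp: nb_def)
  then have r: "remove1 i w = u @ v" using uv(1) by (simp add: remove1_append)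
  show ?thesis
  proof
    fix c
    show "cols (remove1 i w) c = ((cols w)(i := tl (cols w i), Suc i := tl (cols w (Suc i)))) c"
    proof (cases "c = i \<or> c = Suc i")
      case True
      then have "cols u c = []" using cols_avoid[OF uv(2)] by blast
      moreover have "cols u i = []" "cols u (Suc i) = []" using cols_avoid[OF uv(2)] by auto
      ultimately show ?thesis using True r uv(1) by (auto simp: cols_app cols_cons)
    next
      case False
      then show ?thesis using r uv(1) by (auto simp: cols_app cols_cons)
    qed
  qed
qed

lemma cols_act: "cols (act i w) = actC i (cols w)"
proof (cases "fp i w")
  case True
  then show ?thesis using cols_remove_fp[OF True] fp_cols[of i w]
    by (simp add: act_def actC_def)
next
  case False
  then show ?thesis using fp_cols[of i w]
    by (auto simp: act_def actC_def cols_cons fun_eq_iff)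
qed

lemma rd_remove_avoid:
  "\<forall>x\<in>set u. \<not> nb i x \<Longrightarrow> rd (u @ i # v) \<Longrightarrow> rd (u @ v)"
proof (induction u)
  case Nil then show ?case by simp
next
  case (Cons x u)
  have "\<not> nb x i" using Cons.prems(1) nb_sym by auto
  then have "x \<noteq> i" by (auto simp: nb_def)
  then have "fp x (i # v) = fp x v" using \<open>\<not> nb x i\<close> by simp
  then show ?case using Cons by (auto simp: fp_app)
qed

lemma rd_act: "rd w \<Longrightarrow> rd (act i w)"
proof (cases "fp i w")
  case True
  assume "rd w"
  obtain u v where uv: "w = u @ i # v" "\<forall>x\<in>set u. \<not> nb i x" using fp_split[OF True] by blast
  have "i \<notin> set u" using uv(2) by (auto simp: nb_def)
  then have "remove1 i w = u @ v" using uv(1) by (simp add: remove1_append)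
  then show ?thesis using True rd_remove_avoid[OF uv(2)] \<open>rd w\<close> uv(1) by (simp add: act_def)
next
  case False
  assume "rd w" then show ?thesis using False by (simp add: act_def)
qed

lemma invol: assumes "rd w" shows "actC i (actC i (cols w)) = cols w"
proof (cases "fp i w")
  case True
  obtain u v where uv: "w = u @ i # v" "\<forall>x\<in>set u. \<not> nb i x" using fp_split[OF True] by blast
  have "i \<notin> set u" using uv(2) by (auto simp: nb_def)
  then have r: "remove1 i w = u @ v" using uv(1) by (simp add: remove1_append)
  have "rd (i # v)" using assms uv(1) by (induction u arbitrary: w) auto
  then have "\<not> fp i v" by simp
  then have nf: "\<not> fp i (u @ v)" using uv(2) by (simp add: fp_app) (metis fp_split in_set_conv_decomp nb_def)
  have "actC i (actC i (cols w)) = actC i (cols (act i w))" by (simp add: cols_act)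
  also have "\<dots> = cols (act i (act i w))" by (simp add: cols_act)
  also have "act i (act i w) = i # u @ v" using True r nf by (simp add: act_def)
  also have "cols (i # u @ v) = cols w"
  proof
    fix c show "cols (i # u @ v) c = cols w c"
      using cols_avoid[OF uv(2), of c] uv(1) by (auto simp: cols_cons cols_app)
  qed
  finally show ?thesis .
next
  case False
  have "actC i (actC i (cols w)) = cols (act i (act i w))" by (simp add: cols_act)
  also have "act i (act i w) = w" using False by (simp add: act_def)
  finally show ?thesis .
qed

lemma actC_comm: "i + 2 \<le> j \<Longrightarrow> actC i (actC j C) = actC j (actC i C)"
  unfolding actC_def by (auto simp: fun_eq_iff fun_upd_def)

lemma Phi_cons: "Phi (x # w) = act x (Phi w)" by (simp add: Phi_def)
lemma PhiC_cons: "PhiC (x # w) = actC x (PhiC w)" by (simp add: PhiC_def)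

lemma Phi_props: "rd (Phi w) \<and> cols (Phi w) = PhiC w"
  by (induction w) (auto simp: Phi_cons PhiC_cons rd_act cols_act, auto simp: Phi_def PhiC_def cols_def)


definition SR :: "nat \<Rightarrow> (nat list \<times> nat list) set" where
  "SR k = {(x, y). fb_step k x y} \<union> {(x, y). fb_step k y x}"

lemma fb_rel_alt: "fb_rel k = {(u, v). u \<in> fb_words k \<and> v \<in> fb_words k \<and> (u, v) \<in> (SR k)\<^sup>*}"
  by (simp add: fb_rel_def SR_def)

lemma step_ctx: "fb_step k a b \<Longrightarrow> fb_step k (p @ a @ q) (p @ b @ q)"
proof (induction rule: fb_step.induct)
  case (cancel i xs ys)
  then show ?case using fb_step.cancel[of i k "p @ xs" "ys @ q"] by simp
next
  case (commute i j xs ys)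
  then show ?case using fb_step.commute[of i k j "p @ xs" "ys @ q"] by simp
qed

lemma SR_ctx: "(a, b) \<in> SR k \<Longrightarrow> (p @ a @ q, p @ b @ q) \<in> SR k"
  unfolding SR_def using step_ctx by blast

lemma E_ctx: "(a, b) \<in> (SR k)\<^sup>* \<Longrightarrow> (p @ a @ q, p @ b @ q) \<in> (SR k)\<^sup>*"
proof (induction rule: rtrancl_induct)
  case base then show ?case by simp
next
  case (step y z)
  then show ?case using SR_ctx[OF step(2), of p q] by (meson rtrancl.rtrancl_into_rtrancl)
qed

lemma E_sym: "(a, b) \<in> (SR k)\<^sup>* \<Longrightarrow> (b, a) \<in> (SR k)\<^sup>*"
proof -
  have "sym (SR k)" unfolding SR_def sym_def by blast
  then show "(a, b) \<in> (SR k)\<^sup>* \<Longrightarrow> (b, a) \<in> (SR k)\<^sup>*"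
    by (meson sym_rtrancl symD)
qed

lemma PhiC_app: "PhiC (u @ v) = foldr actC u (PhiC v)"
  by (simp add: PhiC_def)

lemma PhiC_invol: "actC i (actC i (PhiC v)) = PhiC v"
  using invol[of "Phi v" i] Phi_props[of v] by simp

lemma PhiC_step: "fb_step k a b \<Longrightarrow> PhiC a = PhiC b"
proof (induction rule: fb_step.induct)
  case (cancel i xs ys)
  then show ?case by (simp add: PhiC_app PhiC_cons PhiC_invol)
next
  case (commute i j xs ys)
  then show ?case using actC_comm[of i j] actC_comm[of j i] by (auto simp: PhiC_app PhiC_cons)
qed

lemma PhiC_E: "(a, b) \<in> (SR k)\<^sup>* \<Longrightarrow> PhiC a = PhiC b"
proof (induction rule: rtrancl_induct)
  case base then show ?case by simp
next
  case (step y z)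
  then show ?case unfolding SR_def using PhiC_step by auto
qed

lemma E_commute_past:
  assumes "x \<in> {1..<k}" "set u \<subseteq> {1..<k}" "\<forall>y\<in>set u. \<not> nb x y"
  shows "(x # u @ v, u @ x # v) \<in> (SR k)\<^sup>*"
  using assms(2,3)
proof (induction u)
  case Nil then show ?case by simp
next
  case (Cons y u)
  have y: "y \<in> {1..<k}" "\<not> nb x y" using Cons.prems by auto
  then have "x + 2 \<le> y \<or> y + 2 \<le> x" by (auto simp: nb_def)
  then have "fb_step k ([] @ [x, y] @ (u @ v)) ([] @ [y, x] @ (u @ v))"
    using fb_step.commute[of x k y "[]" "u @ v"] assms(1) y(1) by blast
  then have 1: "(x # y # u @ v, y # x # u @ v) \<in> (SR k)\<^sup>*" unfolding SR_def by auto
  have "(x # u @ v, u @ x # v) \<in> (SR k)\<^sup>*" using Cons by auto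
  then have 2: "(y # x # u @ v, y # u @ x # v) \<in> (SR k)\<^sup>*" using E_ctx[of _ _ k "[y]" "[]"] by auto
  show ?case using 1 2 by simp
qed

lemma Phi_set: "set (Phi w) \<subseteq> set w"
proof (induction w)
  case Nil then show ?case by (simp add: Phi_def)
next
  case (Cons x w)
  have "set (act x (Phi w)) \<subseteq> insert x (set (Phi w))"
    by (auto simp: act_def dest: in_set_remove1 [THEN iffD1, rotated] intro: notin_set_remove1)
  then show ?case using Cons by (auto simp: Phi_cons)
qed

lemma E_Phi: "set w \<subseteq> {1..<k} \<Longrightarrow> (w, Phi w) \<in> (SR k)\<^sup>*"
proof (induction w)
  case Nil then show ?case by (simp add: Phi_def)
next
  case (Cons x w)
  have x: "x \<in> {1..<k}" and ws: "set w \<subseteq> {1..<k}" using Cons.prems by auto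
  have 1: "(x # w, x # Phi w) \<in> (SR k)\<^sup>*" using E_ctx[OF Cons.IH[OF ws], of "[x]" "[]"] by simp
  have rs: "set (Phi w) \<subseteq> {1..<k}" using Phi_set[of w] ws by auto
  show ?case
  proof (cases "fp x (Phi w)")
    case False
    then show ?thesis using 1 by (simp add: Phi_cons act_def)
  next
    case True
    obtain u v where uv: "Phi w = u @ x # v" "\<forall>y\<in>set u. \<not> nb x y" using fp_split[OF True] by blast
    have "x \<notin> set u" using uv(2) by (auto simp: nb_def)
    then have r: "act x (Phi w) = u @ v" using uv(1) True by (simp add: act_def remove1_append)
    have us: "set u \<subseteq> {1..<k}" using rs uv(1) by auto
    have 2: "(x # u @ x # v, u @ x # x # v) \<in> (SR k)\<^sup>*" using E_commute_past[OF x us uv(2)] by simp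
    have "fb_step k (u @ [x, x] @ v) (u @ v)" using fb_step.cancel[OF x] by blast
    then have 3: "(u @ x # x # v, u @ v) \<in> (SR k)\<^sup>*" unfolding SR_def by auto
    show ?thesis using 1 2 3 uv(1) r by (simp add: Phi_cons)
  qed
qed




definition cntC :: "nat \<Rightarrow> (nat \<Rightarrow> nat list) \<Rightarrow> nat" where
  "cntC z C = count_list (C z) z"

lemma count_tl: "count_list (tl l) z \<le> count_list l z"
  by (cases l) auto

lemma cnt_actC: "cntC z (actC x C) \<le> cntC z C + (if x = z then 1 else 0)"
proof (cases "(\<exists>t. C x = x # t) \<and> (\<exists>t. C (Suc x) = x # t)")
  case True
  then have e: "actC x C = C(x := tl (C x), Suc x := tl (C (Suc x)))" by (simp add: actC_def)
  show ?thesis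
  proof (cases "z = x \<or> z = Suc x")
    case True
    then show ?thesis unfolding e cntC_def using count_tl[of "C z" z] by auto
  next
    case False
    then show ?thesis unfolding e cntC_def by simp
  qed
next
  case False
  then have e: "actC x C = C(x := x # C x, Suc x := x # C (Suc x))" unfolding actC_def by argo
  show ?thesis unfolding e cntC_def by auto
qed

lemma cnt_fold: "cntC z (foldr actC u C) \<le> cntC z C + count_list u z"
proof (induction u)
  case Nil then show ?case by simp
next
  case (Cons x u)
  then show ?case using cnt_actC[of z x "foldr actC u C"] by auto
qed

lemma cnt_cols: "cntC z (cols w) = count_list w z"
  unfolding cntC_def cols_def by (induction w) auto

lemma Phi_nil: "Phi [] = []" by (simp add: Phi_def)

lemma Phi_rd: "rd w \<Longrightarrow> Phi w = w"
  by (induction w) (auto simp: Phi_cons act_def Phi_nil)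

lemma PhiC_rd: "rd w \<Longrightarrow> PhiC w = cols w"
  using Phi_props[of w] Phi_rd[of w] by simp

lemma actC_fold_comm:
  "\<forall>y\<in>set q. \<not> nb z y \<Longrightarrow> actC z (foldr actC q C) = foldr actC q (actC z C)"
proof (induction q)
  case Nil then show ?case by simp
next
  case (Cons y q)
  then have "z + 2 \<le> y \<or> y + 2 \<le> z" by (auto simp: nb_def)
  then have "actC z (actC y D) = actC y (actC z D)" for D
    using actC_comm[of z y] actC_comm[of y z] by auto
  then show ?case using Cons by simp
qed

lemma lp_split: "lp z u \<Longrightarrow> \<exists>p q. u = p @ z # q \<and> (\<forall>y\<in>set q. \<not> nb z y)"
proof -
  assume "lp z u"
  then obtain u1 u2 where "rev u = u1 @ z # u2" "\<forall>y\<in>set u1. \<not> nb z y"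
    unfolding lp_def using fp_split by blast
  then have "u = rev u2 @ z # rev u1" "\<forall>y\<in>set (rev u1). \<not> nb z y"
  proof -
    have "u = rev (rev u)" by simp
    also have "\<dots> = rev u2 @ z # rev u1" using \<open>rev u = u1 @ z # u2\<close> by simp
    finally show "u = rev u2 @ z # rev u1" .
    show "\<forall>y\<in>set (rev u1). \<not> nb z y" using \<open>\<forall>y\<in>set u1. \<not> nb z y\<close> by simp
  qed
  then show ?thesis by blast
qed

lemma cancel_count:
  assumes "rd v" "lp z u" "fp z v"
  shows "cntC z (PhiC (u @ v)) + 2 \<le> count_list u z + count_list v z"
proof -
  obtain p q where pq: "u = p @ z # q" "\<forall>y\<in>set q. \<not> nb z y" using lp_split[OF assms(2)] by blast
  have "PhiC (u @ v) = foldr actC p (actC z (foldr actC q (PhiC v)))"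
    using pq(1) by (simp add: PhiC_app PhiC_cons)
  also have "\<dots> = foldr actC p (foldr actC q (actC z (cols v)))"
    using actC_fold_comm[OF pq(2)] PhiC_rd[OF assms(1)] by simp
  finally have e: "PhiC (u @ v) = foldr actC p (foldr actC q (actC z (cols v)))" .
  obtain t where t1: "cols v z = z # t" using assms(3) fp_cols by blast
  have "(\<exists>t. cols v (Suc z) = z # t)" using assms(3) fp_cols by blast
  then have "cntC z (actC z (cols v)) + 1 = count_list v z"
    using t1 cnt_cols[of z v] by (auto simp: actC_def cntC_def)
  moreover have "cntC z (foldr actC p (foldr actC q (actC z (cols v))))
      \<le> cntC z (actC z (cols v)) + count_list q z + count_list p z"
    using cnt_fold[of z p] cnt_fold[of z q "actC z (cols v)"] by (meson add_le_mono1 le_trans)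
  ultimately show ?thesis using e pq(1) by simp
qed

lemma rd_app: "rd u \<Longrightarrow> rd v \<Longrightarrow> (\<forall>x. lp x u \<longrightarrow> \<not> fp x v) \<Longrightarrow> rd (u @ v)"
proof (induction u)
  case Nil then show ?case by simp
next
  case (Cons x u)
  have "lp y u \<Longrightarrow> lp y (x # u)" for y by (simp add: lp_def fp_app)
  then have ih: "rd (u @ v)" using Cons by auto
  have "\<not> fp x u" using Cons.prems by simp
  moreover have "(\<forall>y\<in>set u. \<not> nb x y) \<Longrightarrow> lp x (x # u)" by (simp add: lp_def fp_app)
  ultimately have "\<not> fp x (u @ v)" using Cons.prems(3) by (auto simp: fp_app)
  then show ?case using ih by simp
qed

definition good :: "nat \<Rightarrow> nat \<Rightarrow> nat list \<Rightarrow> bool" where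
  "good a b y \<longleftrightarrow> rd y \<and> fp a y \<and> (\<forall>x. fp x y \<longrightarrow> x = a) \<and> \<not> lp a y \<and> lp b y
     \<and> (\<forall>x. lp x y \<longrightarrow> x = b)"

definition Yp :: "nat list \<Rightarrow> nat \<Rightarrow> nat list" where "Yp y n = concat (replicate n y)"

lemma Yp_Suc: "Yp y (Suc n) = y @ Yp y n" by (simp add: Yp_def)

lemma Yp_props:
  assumes "good a b y"
  shows "rd (Yp y n) \<and> (\<forall>x. fp x (Yp y n) \<longrightarrow> x = a) \<and> (\<forall>x. lp x (Yp y n) \<longrightarrow> x = b)
     \<and> (n \<ge> 1 \<longrightarrow> fp a (Yp y n) \<and> lp b (Yp y n))"
proof (induction n)
  case 0 then show ?case by (simp add: Yp_def lp_def)
next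
  case (Suc n)
  have g: "rd y" "fp a y" "\<And>x. fp x y \<Longrightarrow> x = a" "\<not> lp a y" "lp b y" "\<And>x. lp x y \<Longrightarrow> x = b"
    using assms unfolding good_def by blast+
  have I: "rd (Yp y n)" "\<And>x. fp x (Yp y n) \<Longrightarrow> x = a" "\<And>x. lp x (Yp y n) \<Longrightarrow> x = b"
    "n \<ge> 1 \<Longrightarrow> lp b (Yp y n)"
    using Suc.IH by blast+
  have "\<forall>x. lp x y \<longrightarrow> \<not> fp x (Yp y n)"
  proof (intro allI impI notI)
    fix x assume "lp x y" "fp x (Yp y n)"
    then show False using I(2) g(4) by blast
  qed
  then have r: "rd (y @ Yp y n)" using rd_app[OF g(1) I(1)] by blast
  have f: "x = a" if "fp x (y @ Yp y n)" for x
    using that g(3) I(2) unfolding fp_app by blast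
  have l: "x = b" if "lp x (y @ Yp y n)" for x
  proof -
    have "fp x (rev (Yp y n) @ rev y)" using that by (simp add: lp_def)
    then have "lp x (Yp y n) \<or> lp x y" unfolding fp_app lp_def by blast
    then show ?thesis using g(6) I(3) by blast
  qed
  have fa: "fp a (y @ Yp y n)" using g(2) by (simp add: fp_app)
  have lb: "lp b (y @ Yp y n)"
  proof (cases n)
    case 0 then show ?thesis using g(5) by (simp add: Yp_def)
  next
    case (Suc m)
    then have "lp b (Yp y n)" using I(4) by simp
    then show ?thesis by (simp add: lp_def fp_app)
  qed
  show ?case unfolding Yp_Suc using r f l fa lb by blast
qed

lemma count_bound_A:
  assumes "good a b y" "n \<ge> 1" "rd r" "fp b r" "\<not> lp a r"
  shows "PhiC (r @ Yp y n) \<noteq> PhiC (Yp y n @ r)"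
proof
  assume eq: "PhiC (r @ Yp y n) = PhiC (Yp y n @ r)"
  note Y = Yp_props[OF assms(1), of n]
  have "rd (r @ Yp y n)" using rd_app[of r "Yp y n"] Y assms by blast
  then have "cntC b (PhiC (r @ Yp y n)) = count_list r b + count_list (Yp y n) b"
    using PhiC_rd cnt_cols by simp
  moreover have "cntC b (PhiC (Yp y n @ r)) + 2 \<le> count_list (Yp y n) b + count_list r b"
    using cancel_count[of r b "Yp y n"] Y assms by blast
  ultimately show False using eq by simp
qed

lemma count_bound_B:
  assumes "good a b y" "n \<ge> 1" "rd r" "lp a r" "\<not> fp b r"
  shows "PhiC (r @ Yp y n) \<noteq> PhiC (Yp y n @ r)"
proof
  assume eq: "PhiC (r @ Yp y n) = PhiC (Yp y n @ r)"
  note Y = Yp_props[OF assms(1), of n]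
  have "rd (Yp y n @ r)" using rd_app[of "Yp y n" r] Y assms by blast
  then have "cntC a (PhiC (Yp y n @ r)) = count_list (Yp y n) a + count_list r a"
    using PhiC_rd cnt_cols by simp
  moreover have "cntC a (PhiC (r @ Yp y n)) + 2 \<le> count_list r a + count_list (Yp y n) a"
    using cancel_count[of "Yp y n" a r] Y assms by blast
  ultimately show False using eq by simp
qed



definition y1 :: "nat \<Rightarrow> nat list" where "y1 a = [a, Suc a, a, Suc a, a, Suc a]"
definition y2 :: "nat \<Rightarrow> nat list" where
  "y2 a = [a, Suc a, Suc (Suc a), a, Suc a, Suc (Suc a), a, Suc a, Suc (Suc a), a, Suc a, Suc (Suc a)]"
definition y3 :: "nat \<Rightarrow> nat list" where "y3 c = [Suc c, c, Suc c, c, Suc c, c]"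
definition y4 :: "nat \<Rightarrow> nat list" where
  "y4 c = [Suc (Suc c), Suc c, c, Suc (Suc c), Suc c, c, Suc (Suc c), Suc c, c, Suc (Suc c), Suc c, c]"

lemma good_y1: "good a (Suc a) (y1 a)"
  unfolding good_def y1_def lp_def by (auto simp: nb_def)
lemma good_y2: "good a (Suc (Suc a)) (y2 a)"
  unfolding good_def y2_def lp_def by (auto simp: nb_def)
lemma good_y3: "good (Suc c) c (y3 c)"
  unfolding good_def y3_def lp_def by (auto simp: nb_def)
lemma good_y4: "good (Suc (Suc c)) c (y4 c)"
  unfolding good_def y4_def lp_def by (auto simp: nb_def)

lemma perm_y1: "word_perm (y1 a) = id"
proof
  fix x
  consider "x = a" | "x = Suc a" | "x = Suc (Suc a)" | "x \<noteq> a \<and> x \<noteq> Suc a \<and> x \<noteq> Suc (Suc a)" by blast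
  then show "word_perm (y1 a) x = id x" by cases (simp_all add: y1_def)
qed

lemma perm_y2: "word_perm (y2 a) = id"
proof
  fix x
  consider "x = a" | "x = Suc a" | "x = Suc (Suc a)" | "x = Suc (Suc (Suc a))"
    | "x \<noteq> a \<and> x \<noteq> Suc a \<and> x \<noteq> Suc (Suc a) \<and> x \<noteq> Suc (Suc (Suc a))" by blast
  then show "word_perm (y2 a) x = id x" by cases (simp_all add: y2_def)
qed

lemma perm_y3: "word_perm (y3 a) = id"
proof
  fix x
  consider "x = a" | "x = Suc a" | "x = Suc (Suc a)" | "x \<noteq> a \<and> x \<noteq> Suc a \<and> x \<noteq> Suc (Suc a)" by blast
  then show "word_perm (y3 a) x = id x" by cases (simp_all add: y3_def)
qed

lemma perm_y4: "word_perm (y4 a) = id"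
proof
  fix x
  consider "x = a" | "x = Suc a" | "x = Suc (Suc a)" | "x = Suc (Suc (Suc a))"
    | "x \<noteq> a \<and> x \<noteq> Suc a \<and> x \<noteq> Suc (Suc a) \<and> x \<noteq> Suc (Suc (Suc a))" by blast
  then show "word_perm (y4 a) x = id x" by cases (simp_all add: y4_def)
qed


lemma fp_adj: "\<not> (fp a r \<and> fp (Suc a) r)"
  by (induction r) (auto simp: nb_def)

lemma lp_adj: "\<not> (lp a r \<and> lp (Suc a) r)"
  unfolding lp_def by (rule fp_adj)

lemma select:
  assumes "rd r" "r \<noteq> []" "set r \<subseteq> {1..<k}" "k \<ge> 4"
  shows "\<exists>y a b. good a b y \<and> set y \<subseteq> {1..<k} \<and> word_perm y = id \<and>
           ((fp b r \<and> \<not> lp a r) \<or> (lp a r \<and> \<not> fp b r))"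
proof -
  obtain b t where r: "r = b # t" using assms(2) by (cases r) auto
  have fb: "fp b r" using r by simp
  have bk: "1 \<le> b" "b < k" using assms(3) r by auto
  show ?thesis
  proof (cases "b \<ge> 3")
    case True
    then obtain c where c: "b = Suc (Suc c)" "1 \<le> c"
      by (metis Suc_le_D numeral_3_eq_3 Suc_le_mono le_add1 Suc_eq_plus1 One_nat_def)
    show ?thesis
    proof (cases "lp (Suc c) r")
      case False
      have "set (y1 (Suc c)) \<subseteq> {1..<k}" using c bk by (auto simp: y1_def)
      then show ?thesis using perm_y1 good_y1[of "Suc c"] fb False c(1) by blast
    next
      case lp1: True
      then have False': "\<not> lp c r" using lp_adj[of c r] by blast
      have "set (y2 c) \<subseteq> {1..<k}" using c bk by (auto simp: y2_def)
      then show ?thesis using perm_y2 good_y2[of c] fb False' c(1) by blast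
    qed
  next
    case b3: False
    show ?thesis
    proof (cases "b + 3 \<le> k")
      case True
      show ?thesis
      proof (cases "lp (Suc b) r")
        case False
        have "set (y3 b) \<subseteq> {1..<k}" using True bk by (auto simp: y3_def)
        then show ?thesis using perm_y3 good_y3 fb False by blast
      next
        case lp1: True
        then have False': "\<not> lp (Suc (Suc b)) r" using lp_adj[of "Suc b" r] by blast
        have "set (y4 b) \<subseteq> {1..<k}" using True bk by (auto simp: y4_def)
        then show ?thesis using perm_y4 good_y4 fb False' by blast
      qed
    next
      case False
      then have b2: "b = Suc (Suc 0)" "k = 4" using b3 bk assms(4) by auto
      show ?thesis
      proof (cases "lp (Suc 0) r")
        case False
        have "set (y1 (Suc 0)) \<subseteq> {1..<k}" using b2 by (auto simp: y1_def)
        then show ?thesis using perm_y1 good_y1[of "Suc 0"] fb False b2 by blast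
      next
        case l1: True
        show ?thesis
        proof (cases "lp (Suc (Suc (Suc 0))) r")
          case False
          have "set (y3 (Suc (Suc 0))) \<subseteq> {1..<k}" using b2 by (auto simp: y3_def)
          then show ?thesis using perm_y3 good_y3[of "Suc (Suc 0)"] fb False b2 by blast
        next
          case True
          have "\<not> fp (Suc (Suc (Suc 0))) r" using fp_adj[of "Suc (Suc 0)" r] fb b2 by simp
          moreover have "set (y2 (Suc 0)) \<subseteq> {1..<k}" using b2 by (auto simp: y2_def)
          ultimately show ?thesis using perm_y2 good_y2[of "Suc 0"] l1 by blast
        qed
      qed
    qed
  qed
qed

lemma key:
  assumes "k \<ge> 4" "set w \<subseteq> {1..<k}" "(w, []) \<notin> (SR k)\<^sup>*"
  shows "\<exists>y. set y \<subseteq> {1..<k} \<and> word_perm y = id \<and> (\<forall>n\<ge>1. (w @ Yp y n, Yp y n @ w) \<notin> (SR k)\<^sup>*)"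
proof -
  define r where "r = Phi w"
  have wr: "(w, r) \<in> (SR k)\<^sup>*" using E_Phi[OF assms(2)] r_def by simp
  have "r \<noteq> []" using wr assms(3) by auto
  moreover have "rd r" using Phi_props r_def by simp
  moreover have "set r \<subseteq> {1..<k}" using Phi_set[of w] assms(2) r_def by auto
  ultimately obtain y a b where y: "good a b y" "set y \<subseteq> {1..<k}" "word_perm y = id"
     "(fp b r \<and> \<not> lp a r) \<or> (lp a r \<and> \<not> fp b r)"
    using select[OF _ _ _ assms(1)] by blast
  have "(w @ Yp y n, Yp y n @ w) \<notin> (SR k)\<^sup>*" if n: "n \<ge> 1" for n
  proof
    assume h: "(w @ Yp y n, Yp y n @ w) \<in> (SR k)\<^sup>*"
    have 1: "(r @ Yp y n, w @ Yp y n) \<in> (SR k)\<^sup>*" using E_ctx[OF E_sym[OF wr], of "[]" "Yp y n"] by simp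
    have 2: "(Yp y n @ w, Yp y n @ r) \<in> (SR k)\<^sup>*" using E_ctx[OF wr, of "Yp y n" "[]"] by simp
    have "(r @ Yp y n, Yp y n @ r) \<in> (SR k)\<^sup>*" using 1 h 2 by (meson rtrancl_trans)
    then have "PhiC (r @ Yp y n) = PhiC (Yp y n @ r)" by (rule PhiC_E)
    then show False using count_bound_A[OF y(1) n \<open>rd r\<close>] count_bound_B[OF y(1) n \<open>rd r\<close>] y(4) by blast
  qed
  then show ?thesis using y by blast
qed



abbreviation cls :: "nat \<Rightarrow> nat list \<Rightarrow> nat list set" where
  "cls k w \<equiv> fb_rel k `` {w}"

lemma words_app: "u \<in> fb_words k \<Longrightarrow> v \<in> fb_words k \<Longrightarrow> u @ v \<in> fb_words k"
  by (simp add: fb_words_def)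

lemma words_rev: "u \<in> fb_words k \<Longrightarrow> rev u \<in> fb_words k"
  by (simp add: fb_words_def)

lemma words_nil: "[] \<in> fb_words k"
  by (simp add: fb_words_def)

lemma fb_equiv: "equiv (fb_words k) (fb_rel k)"
proof (rule equivI)
  show "refl_on (fb_words k) (fb_rel k)"
    unfolding refl_on_def fb_rel_alt by auto
  show "sym (fb_rel k)"
    unfolding sym_def fb_rel_alt using E_sym by blast
  show "trans (fb_rel k)"
    unfolding trans_def fb_rel_alt by (auto intro: rtrancl_trans)
qed (auto simp: fb_rel_alt)

lemma rel_ctx: "(a, b) \<in> fb_rel k \<Longrightarrow> p \<in> fb_words k \<Longrightarrow> q \<in> fb_words k \<Longrightarrow>
   (p @ a @ q, p @ b @ q) \<in> fb_rel k"
  unfolding fb_rel_alt using E_ctx by (auto simp: fb_words_def)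

lemma cls_eq: "u \<in> fb_words k \<Longrightarrow> v \<in> fb_words k \<Longrightarrow> cls k u = cls k v \<longleftrightarrow> (u, v) \<in> fb_rel k"
  using eq_equiv_class_iff[OF fb_equiv] by blast

lemma FB_carrier: "carrier (FB k) = fb_words k // fb_rel k" by (simp add: FB_def)
lemma FB_one: "one (FB k) = cls k []" by (simp add: FB_def)

lemma rel_trans: "(x, y) \<in> fb_rel k \<Longrightarrow> (y, z) \<in> fb_rel k \<Longrightarrow> (x, z) \<in> fb_rel k"
  using fb_equiv[of k] unfolding equiv_def trans_def by blast

lemma FB_mult: "mult (FB k) A B = (\<Union>a\<in>A. \<Union>b\<in>B. fb_rel k `` {a @ b})"
  by (simp add: FB_def)

lemma mult_cls:
  assumes "u \<in> fb_words k" "v \<in> fb_words k"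
  shows "cls k u \<otimes>\<^bsub>FB k\<^esub> cls k v = cls k (u @ v)"
proof -
  have *: "fb_rel k `` {a @ b} = cls k (u @ v)" if "a \<in> cls k u" "b \<in> cls k v" for a b
  proof -
    have ua: "(u, a) \<in> fb_rel k" "(v, b) \<in> fb_rel k" using that by auto
    then have ab: "a \<in> fb_words k" "b \<in> fb_words k" unfolding fb_rel_alt by auto
    have 1: "(u @ v, a @ v) \<in> fb_rel k" using rel_ctx[OF ua(1), of "[]" v] assms by (simp add: words_nil)
    have 2: "(a @ v, a @ b) \<in> fb_rel k" using rel_ctx[OF ua(2), of a "[]"] ab by (simp add: words_nil)
    have "(u @ v, a @ b) \<in> fb_rel k" using rel_trans[OF 1 2] .
    then have "cls k (u @ v) = cls k (a @ b)" by (rule equiv_class_eq[OF fb_equiv])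
    then show ?thesis by simp
  qed
  have ne: "u \<in> cls k u" "v \<in> cls k v"
    using assms fb_equiv[of k] unfolding equiv_def refl_on_def by auto
  have "(\<Union>a\<in>cls k u. \<Union>b\<in>cls k v. fb_rel k `` {a @ b}) = (\<Union>a\<in>cls k u. \<Union>b\<in>cls k v. cls k (u @ v))"
    using * by simp
  also have "\<dots> = cls k (u @ v)" using ne by blast
  finally show ?thesis by (simp add: FB_mult)
qed

lemma rev_cancel: "set u \<subseteq> {1..<k} \<Longrightarrow> (rev u @ u, []) \<in> (SR k)\<^sup>*"
proof (induction u)
  case Nil then show ?case by simp
next
  case (Cons x u)
  have x: "x \<in> {1..<k}" using Cons.prems by auto
  have "fb_step k (rev u @ [x, x] @ u) (rev u @ u)" using fb_step.cancel[OF x] by blast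
  then have 1: "(rev (x # u) @ x # u, rev u @ u) \<in> (SR k)\<^sup>*" unfolding SR_def by auto
  have 2: "(rev u @ u, []) \<in> (SR k)\<^sup>*" using Cons by simp
  show ?case using rtrancl_trans[OF 1 2] .
qed

lemma FB_group: "group (FB k)"
proof (rule groupI)
  fix X Y assume "X \<in> carrier (FB k)" "Y \<in> carrier (FB k)"
  then obtain u v where "u \<in> fb_words k" "v \<in> fb_words k" "X = cls k u" "Y = cls k v"
    by (auto simp: FB_carrier elim!: quotientE)
  then show "X \<otimes>\<^bsub>FB k\<^esub> Y \<in> carrier (FB k)"
    by (simp add: mult_cls FB_carrier quotientI words_app)
next
  show "\<one>\<^bsub>FB k\<^esub> \<in> carrier (FB k)" by (simp add: FB_one FB_carrier quotientI words_nil)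
next
  fix X Y Z assume "X \<in> carrier (FB k)" "Y \<in> carrier (FB k)" "Z \<in> carrier (FB k)"
  then obtain u v w where "u \<in> fb_words k" "v \<in> fb_words k" "w \<in> fb_words k"
     "X = cls k u" "Y = cls k v" "Z = cls k w"
    by (auto simp: FB_carrier elim!: quotientE)
  then show "X \<otimes>\<^bsub>FB k\<^esub> Y \<otimes>\<^bsub>FB k\<^esub> Z = X \<otimes>\<^bsub>FB k\<^esub> (Y \<otimes>\<^bsub>FB k\<^esub> Z)"
    by (simp add: mult_cls words_app)
next
  fix X assume "X \<in> carrier (FB k)"
  then obtain u where "u \<in> fb_words k" "X = cls k u"
    by (auto simp: FB_carrier elim!: quotientE)
  then show "\<one>\<^bsub>FB k\<^esub> \<otimes>\<^bsub>FB k\<^esub> X = X"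
    by (simp add: FB_one mult_cls words_nil)
next
  fix X assume "X \<in> carrier (FB k)"
  then obtain u where u: "u \<in> fb_words k" "X = cls k u"
    by (auto simp: FB_carrier elim!: quotientE)
  have "(rev u @ u, []) \<in> fb_rel k"
    using rev_cancel[of u k] u(1) unfolding fb_rel_alt by (simp add: fb_words_def)
  then have "cls k (rev u) \<otimes>\<^bsub>FB k\<^esub> X = \<one>\<^bsub>FB k\<^esub>"
    using u by (simp add: mult_cls words_rev FB_one cls_eq words_app words_nil)
  moreover have "cls k (rev u) \<in> carrier (FB k)" using u by (simp add: FB_carrier quotientI words_rev)
  ultimately show "\<exists>Y\<in>carrier (FB k). Y \<otimes>\<^bsub>FB k\<^esub> X = \<one>\<^bsub>FB k\<^esub>" by blast
qed

lemma word_perm_app: "word_perm (u @ v) = word_perm u \<circ> word_perm v"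
  by (induction u) auto

lemma word_perm_step: "fb_step k a b \<Longrightarrow> word_perm a = word_perm b"
proof (induction rule: fb_step.induct)
  case (cancel i xs ys)
  then show ?case by (simp add: word_perm_app comp_assoc)
next
  case (commute i j xs ys)
  have "transpose i (Suc i) \<circ> transpose j (Suc j) = transpose j (Suc j) \<circ> transpose i (Suc i)"
    using commute(3) by (auto simp: fun_eq_iff transpose_def)
  then have "\<And>a. transpose i (Suc i) (transpose j (Suc j) a) = transpose j (Suc j) (transpose i (Suc i) a)"
    by (metis comp_apply)
  then show ?case by (simp add: word_perm_app comp_def)
qed

lemma word_perm_E: "(a, b) \<in> (SR k)\<^sup>* \<Longrightarrow> word_perm a = word_perm b"
proof (induction rule: rtrancl_induct)
  case base then show ?case by simp
next
  case (step y z) then show ?case unfolding SR_def using word_perm_step by fastforce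
qed

lemma to_sym_cls: "u \<in> fb_words k \<Longrightarrow> fb_to_sym k (cls k u) = word_perm u"
proof -
  assume u: "u \<in> fb_words k"
  have "u \<in> cls k u" using u fb_equiv by (auto simp: equiv_def refl_on_def)
  then have "(SOME w. w \<in> cls k u) \<in> cls k u" by (rule someI)
  then have "(u, SOME w. w \<in> cls k u) \<in> (SR k)\<^sup>*" unfolding fb_rel_alt by auto
  then show ?thesis unfolding fb_to_sym_def using word_perm_E by metis
qed

lemma inv_cls: "u \<in> fb_words k \<Longrightarrow> inv\<^bsub>FB k\<^esub> (cls k u) = cls k (rev u)"
proof -
  assume u: "u \<in> fb_words k"
  have "(rev u @ u, []) \<in> fb_rel k"
    using rev_cancel[of u k] u unfolding fb_rel_alt by (simp add: fb_words_def)
  then have "cls k (rev u) \<otimes>\<^bsub>FB k\<^esub> cls k u = \<one>\<^bsub>FB k\<^esub>"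
    using u by (simp add: mult_cls words_rev FB_one cls_eq words_app words_nil)
  then show ?thesis using group.inv_equality[OF FB_group] u
    by (simp add: FB_carrier quotientI words_rev)
qed

lemma PFB_carrier: "carrier (PFB k) = {X \<in> carrier (FB k). fb_to_sym k X = id}"
  by (simp add: PFB_def kernel_def sym_group_one)

lemma PFB_sub: "subgroup (carrier (PFB k)) (FB k)"
proof (rule group.subgroupI[OF FB_group])
  show "carrier (PFB k) \<subseteq> carrier (FB k)" by (auto simp: PFB_carrier)
  show "carrier (PFB k) \<noteq> {}"
    using to_sym_cls[OF words_nil, of k] quotientI[OF words_nil, of "fb_rel k" k]
    by (auto simp: PFB_carrier FB_carrier)
next
  fix X assume "X \<in> carrier (PFB k)"
  then obtain u where u: "u \<in> fb_words k" "X = cls k u" "word_perm u = id"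
    by (auto simp: PFB_carrier FB_carrier to_sym_cls elim!: quotientE)
  have "(rev u @ u, []) \<in> (SR k)\<^sup>*" using rev_cancel[of u k] u by (simp add: fb_words_def)
  then have "word_perm (rev u) = id" using word_perm_E u(3) by (fastforce simp: word_perm_app)
  then show "inv\<^bsub>FB k\<^esub> X \<in> carrier (PFB k)"
    using u by (simp add: inv_cls PFB_carrier FB_carrier quotientI words_rev to_sym_cls)
next
  fix X Y assume "X \<in> carrier (PFB k)" "Y \<in> carrier (PFB k)"
  then obtain u v where u: "u \<in> fb_words k" "X = cls k u" "word_perm u = id"
      "v \<in> fb_words k" "Y = cls k v" "word_perm v = id"
    by (auto simp: PFB_carrier FB_carrier to_sym_cls elim!: quotientE)
  then show "X \<otimes>\<^bsub>FB k\<^esub> Y \<in> carrier (PFB k)"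
    by (simp add: mult_cls PFB_carrier FB_carrier quotientI words_app to_sym_cls word_perm_app)
qed

lemma PFB_group: "group (PFB k)"
  using group.subgroup_imp_group[OF FB_group PFB_sub] by (simp add: PFB_def)


lemma pow_in_sub:
  fixes G (structure)
  assumes G: "group G" and H: "subgroup H G" and fin: "finite (rcosets\<^bsub>G\<^esub> H)"
    and x: "x \<in> carrier G"
  shows "\<exists>n::nat. n \<ge> 1 \<and> x [^]\<^bsub>G\<^esub> n \<in> H"
proof -
  interpret group G by (rule G)
  define f where "f = (\<lambda>m::nat. H #> x [^] m)"
  have "range f \<subseteq> rcosets H" unfolding f_def using rcosetsI subgroup.subset[OF H] x by auto
  then have "finite (range f)" using fin finite_subset by blast
  then have "\<not> inj f" using finite_imageD[of f UNIV] by auto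
  then obtain i j where ij: "i \<noteq> j" "f i = f j" unfolding inj_def by blast
  have "\<exists>i j. i < j \<and> f i = f j"
  proof (cases "i < j")
    case True then show ?thesis using ij by blast
  next
    case False then have "j < i" using ij by auto
    then show ?thesis using ij by metis
  qed
  then obtain i j :: nat where ij: "i < j" "H #> x [^] i = H #> x [^] j" unfolding f_def by blast
  have "x [^] j \<in> H #> x [^] i" using repr_independenceD[OF H _ ij(2)] x by simp
  then have "x [^] j \<otimes> inv (x [^] i) \<in> H"
    using subgroup.rcos_module_imp[OF H G] x by simp
  moreover have "x [^] j = x [^] (j - i) \<otimes> x [^] i"
    using nat_pow_mult[OF x, of "j - i" i] ij(1) by simp
  ultimately have "x [^] (j - i) \<in> H" using x by (simp add: m_assoc)
  then show ?thesis using ij(1) by (intro exI[of _ "j - i"]) auto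
qed

lemma VZ_trivial:
  fixes G (structure)
  assumes G: "group G"
    and nc: "\<And>g. g \<in> carrier G \<Longrightarrow> g \<noteq> \<one>\<^bsub>G\<^esub> \<Longrightarrow>
       \<exists>x\<in>carrier G. \<forall>n::nat. n \<ge> 1 \<longrightarrow> g \<otimes>\<^bsub>G\<^esub> x [^]\<^bsub>G\<^esub> n \<noteq> x [^]\<^bsub>G\<^esub> n \<otimes>\<^bsub>G\<^esub> g"
  shows "virtual_centre G = {\<one>\<^bsub>G\<^esub>}"
proof
  interpret group G by (rule G)
  show "virtual_centre G \<subseteq> {\<one>}"
  proof
    fix g assume "g \<in> virtual_centre G"
    then obtain H where g: "g \<in> carrier G" "subgroup H G" "finite (rcosets H)"
        "\<forall>h\<in>H. g \<otimes> h = h \<otimes> g"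
      unfolding virtual_centre_def by blast
    show "g \<in> {\<one>}"
    proof (rule ccontr)
      assume "g \<notin> {\<one>}"
      then obtain x where x: "x \<in> carrier G" "\<forall>n::nat. n \<ge> 1 \<longrightarrow> g \<otimes> x [^] n \<noteq> x [^] n \<otimes> g"
        using nc g(1) by blast
      obtain n :: nat where "n \<ge> 1" "x [^] n \<in> H" using pow_in_sub[OF G g(2) g(3) x(1)] by blast
      then show False using g(4) x(2) by blast
    qed
  qed
  show "{\<one>} \<subseteq> virtual_centre G"
  proof -
    have "rcosets (carrier G) \<subseteq> {carrier G}"
      unfolding RCOSETS_def using subgroup.rcos_const[OF subgroup_self G] by auto
    then have "finite (rcosets (carrier G))" using finite_subset by blast
    then show ?thesis unfolding virtual_centre_def using subgroup_self by auto
  qed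
qed

lemma Yp_words: "set y \<subseteq> {1..<k} \<Longrightarrow> Yp y n \<in> fb_words k"
  by (induction n) (auto simp: Yp_def fb_words_def)

lemma Yp_Suc': "Yp y (Suc n) = Yp y n @ y"
  by (induction n) (auto simp: Yp_def)

lemma pow_cls: "y \<in> fb_words k \<Longrightarrow> cls k y [^]\<^bsub>FB k\<^esub> (n::nat) = cls k (Yp y n)"
proof (induction n)
  case 0 then show ?case by (simp add: FB_one Yp_def)
next
  case (Suc n)
  have "cls k y [^]\<^bsub>FB k\<^esub> Suc n = cls k y [^]\<^bsub>FB k\<^esub> n \<otimes>\<^bsub>FB k\<^esub> cls k y"
    using monoid.nat_pow_Suc[OF group.is_monoid[OF FB_group]] by blast
  also have "\<dots> = cls k (Yp y (Suc n))"
    using Suc Yp_words[of y k n] by (simp add: mult_cls Yp_Suc' fb_words_def)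
  finally show ?case .
qed

lemma pow_PFB: "x [^]\<^bsub>PFB k\<^esub> (n::nat) = x [^]\<^bsub>FB k\<^esub> n"
  by (simp add: nat_pow_def PFB_def)

lemma FB_nc:
  assumes k: "k \<ge> 4" and g: "g \<in> carrier (FB k)" "g \<noteq> \<one>\<^bsub>FB k\<^esub>"
  shows "\<exists>x\<in>carrier (PFB k). \<forall>n::nat. n \<ge> 1 \<longrightarrow>
     g \<otimes>\<^bsub>FB k\<^esub> x [^]\<^bsub>FB k\<^esub> n \<noteq> x [^]\<^bsub>FB k\<^esub> n \<otimes>\<^bsub>FB k\<^esub> g"
proof -
  obtain w where w: "w \<in> fb_words k" "g = cls k w" using g(1) by (auto simp: FB_carrier elim!: quotientE)
  have "(w, []) \<notin> (SR k)\<^sup>*"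
  proof
    assume "(w, []) \<in> (SR k)\<^sup>*"
    then have "(w, []) \<in> fb_rel k" using w(1) words_nil unfolding fb_rel_alt by auto
    then show False using g(2) w cls_eq[OF w(1) words_nil] by (simp add: FB_one)
  qed
  then obtain y where y: "set y \<subseteq> {1..<k}" "word_perm y = id"
      "\<forall>n\<ge>1. (w @ Yp y n, Yp y n @ w) \<notin> (SR k)\<^sup>*"
    using key[OF k _ \<open>(w, []) \<notin> (SR k)\<^sup>*\<close>] w(1) unfolding fb_words_def by blast
  have yw: "y \<in> fb_words k" using y(1) by (simp add: fb_words_def)
  have xc: "cls k y \<in> carrier (PFB k)"
    using yw y(2) by (simp add: PFB_carrier FB_carrier quotientI to_sym_cls)
  have "g \<otimes>\<^bsub>FB k\<^esub> cls k y [^]\<^bsub>FB k\<^esub> n \<noteq> cls k y [^]\<^bsub>FB k\<^esub> n \<otimes>\<^bsub>FB k\<^esub> g" if n: "n \<ge> 1" for n :: nat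
  proof
    assume h: "g \<otimes>\<^bsub>FB k\<^esub> cls k y [^]\<^bsub>FB k\<^esub> n = cls k y [^]\<^bsub>FB k\<^esub> n \<otimes>\<^bsub>FB k\<^esub> g"
    have Yw: "Yp y n \<in> fb_words k" using Yp_words[OF y(1)] .
    have "cls k (w @ Yp y n) = cls k (Yp y n @ w)"
      using h w Yw by (simp add: pow_cls[OF yw] mult_cls)
    then have "(w @ Yp y n, Yp y n @ w) \<in> fb_rel k"
      using cls_eq words_app w(1) Yw by blast
    then show False using y(3) n unfolding fb_rel_alt by auto
  qed
  then show ?thesis using xc by blast
qed

theorem corollary2p15:
  fixes k :: nat
  assumes "k \<ge> 4"
  shows "virtual_centre (FB k) = {\<one>\<^bsub>FB k\<^esub>} \<and> virtual_centre (PFB k) = {\<one>\<^bsub>PFB k\<^esub>}"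
proof
  show "virtual_centre (FB k) = {\<one>\<^bsub>FB k\<^esub>}"
  proof (rule VZ_trivial[OF FB_group])
    fix g assume "g \<in> carrier (FB k)" "g \<noteq> \<one>\<^bsub>FB k\<^esub>"
    then obtain x where "x \<in> carrier (PFB k)" "\<forall>n::nat. n \<ge> 1 \<longrightarrow>
       g \<otimes>\<^bsub>FB k\<^esub> x [^]\<^bsub>FB k\<^esub> n \<noteq> x [^]\<^bsub>FB k\<^esub> n \<otimes>\<^bsub>FB k\<^esub> g"
      using FB_nc[OF assms] by blast
    moreover have "x \<in> carrier (FB k)" using \<open>x \<in> carrier (PFB k)\<close> by (simp add: PFB_carrier)
    ultimately show "\<exists>x\<in>carrier (FB k). \<forall>n::nat. n \<ge> 1 \<longrightarrow>
       g \<otimes>\<^bsub>FB k\<^esub> x [^]\<^bsub>FB k\<^esub> n \<noteq> x [^]\<^bsub>FB k\<^esub> n \<otimes>\<^bsub>FB k\<^esub> g" by blast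
  qed
  show "virtual_centre (PFB k) = {\<one>\<^bsub>PFB k\<^esub>}"
  proof (rule VZ_trivial[OF PFB_group])
    fix g assume g: "g \<in> carrier (PFB k)" "g \<noteq> \<one>\<^bsub>PFB k\<^esub>"
    have o: "\<one>\<^bsub>PFB k\<^esub> = \<one>\<^bsub>FB k\<^esub>" by (simp add: PFB_def)
    have "g \<in> carrier (FB k)" "g \<noteq> \<one>\<^bsub>FB k\<^esub>" using g o by (auto simp: PFB_carrier)
    then obtain x where "x \<in> carrier (PFB k)" "\<forall>n::nat. n \<ge> 1 \<longrightarrow>
       g \<otimes>\<^bsub>FB k\<^esub> x [^]\<^bsub>FB k\<^esub> n \<noteq> x [^]\<^bsub>FB k\<^esub> n \<otimes>\<^bsub>FB k\<^esub> g"
      using FB_nc[OF assms] by blast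
    then show "\<exists>x\<in>carrier (PFB k). \<forall>n::nat. n \<ge> 1 \<longrightarrow>
       g \<otimes>\<^bsub>PFB k\<^esub> x [^]\<^bsub>PFB k\<^esub> n \<noteq> x [^]\<^bsub>PFB k\<^esub> n \<otimes>\<^bsub>PFB k\<^esub> g"
      by (auto simp: pow_PFB) (auto simp: PFB_def)
  qed
qed


end
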